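(* For every positive integer $n$, the number of circular permutations of $[n]=\{1,2,\ldots,n\}$ that avoid the pattern $1342$ equals $2^{n-1}-(n-1)$.
   Context: A circular permutation of $[n]$ is an arrangement of $1,2,\ldots,n$ clockwise around a circle, two arrangements being identified if they differ by a rotation. Equivalently, it can be represented uniquely as a linear permutation $\pi_1\pi_2\cdots\pi_n$ of $[n]$ with $\pi_n=n$, whose rotations all represent the same circular permutation. The reduced form of a sequence of distinct positive integers is obtained by replacing its smallest entry by $1$, its next smallest by $2$, and so on; a pattern is such a reduced form. An occurrence of a pattern $\tau$ of length $m$ in a circular permutation $\pi$ is a sequence of $m$ letters of $\pi$ read in clockwise order and lying within one revolution (i.e., a subsequence of some rotation of the linear representation) whose reduced form is $\tau$; $\pi$ avoids $\tau$ if it has no occurrence of $\tau$. *)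

theory Defs
  imports Main "HOL-Library.Sublist" "HOL-Combinatorics.Multiset_Permutations"
begin

(* Circular permutations of [n], represented uniquely by linear permutations
   (lists) of {1..n} whose last entry is n. *)
definition circ_perms :: "nat \<Rightarrow> nat list set" where
  "circ_perms n = {p \<in> permutations_of_set {1..n}. last p = n}"

definition reduced_form :: "nat list \<Rightarrow> nat list" where
  "reduced_form xs = map (\<lambda>x. card {y \<in> set xs. y \<le> x}) xs"

definition circ_contains :: "nat list \<Rightarrow> nat list \<Rightarrow> bool" where
  "circ_contains p tau = (\<exists>k ys. subseq ys (rotate k p) \<and> reduced_form ys = tau)"

definition circ_avoids :: "nat list \<Rightarrow> nat list \<Rightarrow> bool" where
  "circ_avoids p tau = (\<not> circ_contains p tau)"

end

theory Submission
  imports Defs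
begin

definition pat213 :: "nat list \<Rightarrow> bool" where
  "pat213 s \<longleftrightarrow> (\<exists>a b c. a < b \<and> b < c \<and> subseq [b,a,c] s)"
definition pat231 :: "nat list \<Rightarrow> bool" where
  "pat231 s \<longleftrightarrow> (\<exists>a b c. a < b \<and> b < c \<and> subseq [b,c,a] s)"
definition pat4 :: "nat list \<Rightarrow> bool" where
  "pat4 s \<longleftrightarrow> (\<exists>a b c d. a < d \<and> d < b \<and> b < c \<and>
     (subseq [a,b,c,d] s \<or> subseq [b,c,d,a] s \<or> subseq [c,d,a,b] s \<or> subseq [d,a,b,c] s))"

lemma subseq_set: "subseq xs ys \<Longrightarrow> set xs \<subseteq> set ys"
  by (induct rule: list_emb.induct) auto

lemma rank_mono:
  assumes "v \<le> u"
  shows "card {y \<in> set xs. y \<le> v} \<le> card {y \<in> set xs. (y::nat) \<le> u}"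
  by (rule card_mono) (use assms in auto)

lemma rf_iff:
  "reduced_form ys = [1,3,4,2] \<longleftrightarrow> (\<exists>a b c d. ys = [a,b,c,d] \<and> a < d \<and> d < b \<and> b < c)"
proof
  assume h: "reduced_form ys = [1,3,4,2]"
  have "length ys = length (reduced_form ys)" by (simp add: reduced_form_def)
  then have "length ys = 4" using h by simp
  then obtain a b c d where ys: "ys = [a,b,c,d]"
    by (auto simp: numeral_eq_Suc length_Suc_conv)
  let ?r = "\<lambda>x. card {y \<in> set ys. y \<le> x}"
  have r: "?r a = 1" "?r b = 3" "?r c = 4" "?r d = 2" using h ys by (auto simp: reduced_form_def)
  have lt: "?r u < ?r v \<Longrightarrow> u < v" for u v
    using rank_mono[of v u ys] by (meson leI not_less)
  show "\<exists>a b c d. ys = [a,b,c,d] \<and> a < d \<and> d < b \<and> b < c"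
    using ys lt[of a d] lt[of d b] lt[of b c] r by auto
next
  assume "\<exists>a b c d. ys = [a,b,c,d] \<and> a < d \<and> d < b \<and> b < c"
  then obtain a b c d where ys: "ys = [a,b,c,d]" and o: "a < d" "d < b" "b < c" by blast
  have 1: "{y \<in> set [a,b,c,d]. y \<le> a} = {a}" using o by auto
  have 2: "{y \<in> set [a,b,c,d]. y \<le> b} = {a,b,d}" using o by auto
  have 3: "{y \<in> set [a,b,c,d]. y \<le> c} = {a,b,c,d}" using o by auto
  have 4: "{y \<in> set [a,b,c,d]. y \<le> d} = {a,d}" using o by auto
  have "reduced_form ys = [card {a}, card {a,b,d}, card {a,b,c,d}, card {a,d}]"
    unfolding reduced_form_def ys by (simp only: list.map 1 2 3 4)
  then show "reduced_form ys = [1,3,4,2]" using o by simp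
qed

lemma rot4: "xs1 @ xs2 = [a,b,c,d] \<Longrightarrow>
  xs2@xs1 = [a,b,c,d] \<or> xs2@xs1 = [b,c,d,a] \<or> xs2@xs1 = [c,d,a,b] \<or> xs2@xs1 = [d,a,b,c]"
proof -
  assume h: "xs1 @ xs2 = [a,b,c,d]"
  then have e: "xs1 = take (length xs1) [a,b,c,d]" "xs2 = drop (length xs1) [a,b,c,d]"
    by (metis append_eq_conv_conj)+
  have "length xs1 \<le> 4" using arg_cong[OF h, of length] by simp
  then consider "length xs1 = 0" | "length xs1 = 1" | "length xs1 = 2" | "length xs1 = 3" | "length xs1 = 4"
    by linarith
  then show ?thesis
    by cases (subst (1 2) e, simp add: numeral_eq_Suc)+
qed

lemma subseq_rot: "subseq (xs@ys) p \<Longrightarrow> \<exists>k. subseq (ys@xs) (rotate k p)"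
proof -
  assume "subseq (xs@ys) p"
  then obtain us vs where "p = us @ vs" "subseq xs us" "subseq ys vs"
    using list_emb_appendD by blast
  then have "subseq (ys@xs) (rotate (length us) p)"
    by (simp add: rotate_append list_emb_append_mono)
  then show ?thesis by blast
qed

lemma circ_iff: "circ_contains p [1,3,4,2] \<longleftrightarrow> pat4 p"
proof
  assume "circ_contains p [1,3,4,2]"
  then obtain k ys where s: "subseq ys (rotate k p)" and r: "reduced_form ys = [1,3,4,2]"
    unfolding circ_contains_def by blast
  from r obtain a b c d where ys: "ys = [a,b,c,d]" and o: "a < d" "d < b" "b < c"
    using rf_iff by blast
  let ?j = "k mod length p"
  from s have "subseq ys (drop ?j p @ take ?j p)" by (simp add: rotate_drop_take)
  then obtain xs1 xs2 where e: "ys = xs1 @ xs2" "subseq xs1 (drop ?j p)" "subseq xs2 (take ?j p)"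
    by (rule subseq_appendE)
  then have "subseq (xs2 @ xs1) (take ?j p @ drop ?j p)" using e(2,3) by (intro list_emb_append_mono)
  then have "subseq (xs2 @ xs1) p" by simp
  moreover have "xs2@xs1 = [a,b,c,d] \<or> xs2@xs1 = [b,c,d,a] \<or> xs2@xs1 = [c,d,a,b] \<or> xs2@xs1 = [d,a,b,c]"
    using rot4 e(1) ys by metis
  ultimately show "pat4 p" unfolding pat4_def using o by metis
next
  assume "pat4 p"
  then obtain a b c d where o: "a < d" "d < b" "b < c" and
     h: "subseq [a,b,c,d] p \<or> subseq ([b,c,d]@[a]) p \<or> subseq ([c,d]@[a,b]) p \<or> subseq ([d]@[a,b,c]) p"
    unfolding pat4_def by auto
  have rf: "reduced_form [a,b,c,d] = [1,3,4,2]" using rf_iff o by blast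
  have "\<exists>k. subseq [a,b,c,d] (rotate k p)"
    using h subseq_rot[of "[b,c,d]" "[a]" p] subseq_rot[of "[c,d]" "[a,b]" p] subseq_rot[of "[d]" "[a,b,c]" p]
    by (metis append_Cons append_Nil rotate0 id_apply)
  then show "circ_contains p [1,3,4,2]" unfolding circ_contains_def using rf by blast
qed

lemma subseq_snoc_iff: "subseq xs (s @ [n]) \<longleftrightarrow> subseq xs s \<or> (\<exists>ys. xs = ys @ [n] \<and> subseq ys s)"
proof
  assume "subseq xs (s @ [n])"
  then obtain xs1 xs2 where "xs = xs1 @ xs2" "subseq xs1 s" "subseq xs2 [n]"
    by (rule subseq_appendE)
  moreover have "xs2 = [] \<or> xs2 = [n]" using \<open>subseq xs2 [n]\<close>
    by (cases xs2) (auto split: if_splits)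
  ultimately show "subseq xs s \<or> (\<exists>ys. xs = ys @ [n] \<and> subseq ys s)" by auto
next
  show "subseq xs s \<or> (\<exists>ys. xs = ys @ [n] \<and> subseq ys s) \<Longrightarrow> subseq xs (s @ [n])"
    by (auto intro: list_emb_append_mono list_emb_prefix)
qed

lemma pat4_snoc:
  assumes "\<forall>y\<in>set s. y < n"
  shows "pat4 (s @ [n]) \<longleftrightarrow> pat213 s \<or> pat4 s"
proof
  assume "pat4 (s @ [n])"
  then obtain a b c d where o: "a < d" "d < b" "b < c" and
     h: "subseq [a,b,c,d] (s@[n]) \<or> subseq [b,c,d,a] (s@[n]) \<or> subseq [c,d,a,b] (s@[n]) \<or> subseq [d,a,b,c] (s@[n])"
    unfolding pat4_def by auto
  have c: "c \<notin> set s \<or> c = n \<Longrightarrow> False" if "c \<in> set s" for c using that assms by auto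
  show "pat213 s \<or> pat4 s"
  proof (cases "subseq [a,b,c,d] s \<or> subseq [b,c,d,a] s \<or> subseq [c,d,a,b] s \<or> subseq [d,a,b,c] s")
    case True then show ?thesis unfolding pat4_def using o by blast
  next
    case False
    with h have "\<exists>ys. ([a,b,c,d] = ys@[n] \<and> subseq ys s) \<or> ([b,c,d,a] = ys@[n] \<and> subseq ys s) \<or>
      ([c,d,a,b] = ys@[n] \<and> subseq ys s) \<or> ([d,a,b,c] = ys@[n] \<and> subseq ys s)"
      unfolding subseq_snoc_iff by blast
    then have "(d = n \<and> c \<in> set s) \<or> (a = n \<and> d \<in> set s) \<or> (b = n \<and> c \<in> set s) \<or> (c = n \<and> subseq [d,a,b] s)"
      by (auto dest!: subseq_set)
    then have "subseq [d,a,b] s" using o assms by auto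
    then show ?thesis unfolding pat213_def using o by blast
  qed
next
  assume "pat213 s \<or> pat4 s"
  then show "pat4 (s @ [n])"
  proof
    assume "pat213 s"
    then obtain a b c where o: "a < b" "b < c" "subseq [b,a,c] s" unfolding pat213_def by blast
    then have "c < n" using assms subseq_set by fastforce
    have "subseq ([b,a,c] @ [n]) (s @ [n])" using o(3) by (rule list_emb_append_mono) simp
    then show ?thesis unfolding pat4_def using o \<open>c < n\<close> by (metis append_Cons append_Nil)
  next
    assume "pat4 s" then show ?thesis unfolding pat4_def by (meson list_emb_prefix)
  qed
qed

definition asc :: "nat list \<Rightarrow> bool" where "asc l \<longleftrightarrow> (\<exists>u v. u < v \<and> subseq [u,v] l)"
definition desc :: "nat list \<Rightarrow> bool" where "desc l \<longleftrightarrow> (\<exists>u v. v < u \<and> subseq [u,v] l)"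
definition Wp :: "nat list \<Rightarrow> bool" where "Wp l \<longleftrightarrow> \<not> pat213 l \<and> \<not> pat231 l"
definition Good :: "nat list \<Rightarrow> bool" where "Good l \<longleftrightarrow> \<not> pat213 l \<and> \<not> pat4 l"

lemma chain:
  assumes "distinct l" "subseq [p,q] l" "subseq (q#rs) l"
  shows "subseq (p#q#rs) l"
proof -
  from list_emb_ConsD[OF assms(2)] obtain us v vs where l0: "l = us @ v # vs" "p = v" "subseq [q] vs"
    by blast
  then have l: "l = us @ p # vs" by simp
  have "q \<in> set vs" using l0(3) by (simp add: subseq_singleton_left)
  then obtain w vs' where vs: "vs = w @ q # vs'" by (meson split_list)
  from list_emb_ConsD[OF assms(3)] obtain us2 v2 vs2 where l2': "l = us2 @ v2 # vs2" "q = v2" "subseq rs vs2"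
    by blast
  then have l2: "l = us2 @ q # vs2" and r: "subseq rs vs2" by simp_all
  have l3: "l = (us @ p # w) @ q # vs'" using l vs by simp
  have n1: "q \<notin> set us2" using l2 assms(1) by simp
  have n2: "q \<notin> set vs2" using l2 assms(1) by simp
  have "us2 @ q # vs2 = (us @ p # w) @ q # vs'" using l2 l3 by simp
  then have "vs2 = vs'" using append_Cons_eq_iff[OF n1 n2] by metis
  then have r': "subseq rs vs'" using r by simp
  have s1: "subseq (q#rs) (q # vs')" using r' by simp
  have s2: "subseq (q#rs) (w @ q # vs')" using s1 by (rule list_emb_append2)
  have s3: "subseq (p#q#rs) (p # w @ q # vs')" using s2 by simp
  have s4: "subseq (p#q#rs) (us @ p # w @ q # vs')" using s3 by (rule list_emb_append2)
  have "l = us @ p # w @ q # vs'" using l vs by simp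
  then show ?thesis using s4 by simp
qed

lemma subseq_trans: "subseq xs ys \<Longrightarrow> subseq ys zs \<Longrightarrow> subseq xs zs"
  by (rule subseq_order.order_trans)

lemma sub2_of3: "subseq [p,q,r] l \<Longrightarrow> subseq [p,q] l \<and> subseq [q,r] l \<and> subseq [p,r] l"
proof -
  assume h: "subseq [p,q,r] l"
  have "subseq [p,q] [p,q,r]" using list_emb_prefix[of "(=)" "[p,q]" "[p,q]" "[r]"] by simp
  moreover have "subseq [q,r] [p,q,r]" by (rule list_emb_Cons) simp
  moreover have "subseq [p,r] [p,q,r]" by (rule list_emb_Cons2) (simp_all add: list_emb_Cons)
  ultimately show ?thesis using h subseq_trans by metis
qed

lemma sub3: "distinct l \<Longrightarrow> subseq [p,q,r] l \<longleftrightarrow> subseq [p,q] l \<and> subseq [q,r] l"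
proof
  assume "subseq [p,q,r] l" then show "subseq [p,q] l \<and> subseq [q,r] l" using sub2_of3[of p q r l] by simp
next
  assume "distinct l" "subseq [p,q] l \<and> subseq [q,r] l"
  then show "subseq [p,q,r] l" using chain[of l p q "[r]"] by simp
qed

lemma sub4: "distinct l \<Longrightarrow> subseq [p,q,r,s] l \<longleftrightarrow> subseq [p,q] l \<and> subseq [q,r] l \<and> subseq [r,s] l"
proof
  assume "subseq [p,q,r,s] l"
  moreover have "subseq [p,q,r] [p,q,r,s]" using list_emb_prefix[of "(=)" "[p,q,r]" "[p,q,r]" "[s]"] by simp
  moreover have "subseq [q,r,s] [p,q,r,s]" by (rule list_emb_Cons) simp
  ultimately have "subseq [p,q,r] l" "subseq [q,r,s] l" using subseq_trans by metis+
  then show "subseq [p,q] l \<and> subseq [q,r] l \<and> subseq [r,s] l" using sub2_of3[of p q r l] sub2_of3[of q r s l] by simp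
next
  assume "distinct l" "subseq [p,q] l \<and> subseq [q,r] l \<and> subseq [r,s] l"
  then have "subseq [q,r,s] l" using chain[of l q r "[s]"] by simp
  then show "subseq [p,q,r,s] l" using chain[of l p q "[r,s]"] \<open>distinct l\<close> \<open>subseq [p,q] l \<and> subseq [q,r] l \<and> subseq [r,s] l\<close> by simp
qed

lemma pair_split:
  "subseq [u,v] (a @ x # b) \<longleftrightarrow> subseq [u,v] a \<or> subseq [u,v] b \<or>
     (u \<in> set a \<and> (v = x \<or> v \<in> set b)) \<or> (u = x \<and> v \<in> set b)"
proof
  assume "subseq [u,v] (a @ x # b)"
  then obtain ys1 ys2 where e: "[u,v] = ys1 @ ys2" "subseq ys1 a" "subseq ys2 (x#b)"
    by (rule subseq_appendE)
  have "length ys1 \<le> 2" using arg_cong[OF e(1), of length] by simp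
  then consider "length ys1 = 0" | "length ys1 = 1" | "length ys1 = 2" by linarith
  then show "subseq [u,v] a \<or> subseq [u,v] b \<or>
     (u \<in> set a \<and> (v = x \<or> v \<in> set b)) \<or> (u = x \<and> v \<in> set b)"
  proof cases
    case 1
    then have "ys2 = [u,v]" using e(1) by simp
    then have "subseq [u,v] (x#b)" using e(3) by simp
    then show ?thesis by (cases "u = x") (simp_all add: subseq_singleton_left)
  next
    case 2
    then have "ys1 = [u]" "ys2 = [v]" using e(1) by (cases ys1; simp)+
    then show ?thesis using e(2,3) by (auto simp: subseq_singleton_left split: if_splits)
  next
    case 3
    have "length ys2 = 0" using arg_cong[OF e(1), of length] 3 by simp
    then have "ys1 = [u,v]" using e(1) by simp
    then show ?thesis using e(2) by simp
  qed
next
  assume "subseq [u,v] a \<or> subseq [u,v] b \<or>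
     (u \<in> set a \<and> (v = x \<or> v \<in> set b)) \<or> (u = x \<and> v \<in> set b)"
  then show "subseq [u,v] (a @ x # b)"
  proof (elim disjE conjE)
    assume "subseq [u,v] a" then show ?thesis by (simp add: list_emb_prefix)
  next
    assume "subseq [u,v] b" 
    then have "subseq [u,v] (x#b)" by (rule list_emb_Cons)
    then show ?thesis by (rule list_emb_append2)
  next
    assume "u \<in> set a" "v = x"
    then have "subseq ([u] @ [v]) (a @ x # b)"
      by (intro list_emb_append_mono) (auto simp: subseq_singleton_left)
    then show ?thesis by simp
  next
    assume "u \<in> set a" "v \<in> set b"
    then have "subseq ([u] @ [v]) (a @ x # b)"
      by (intro list_emb_append_mono) (auto simp: subseq_singleton_left)
    then show ?thesis by simp
  next
    assume "u = x" "v \<in> set b"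
    then have "subseq ([] @ [u,v]) (a @ x # b)"
      by (intro list_emb_append_mono) (auto simp: subseq_singleton_left)
    then show ?thesis by simp
  qed
qed

lemma pair_set: "subseq [u,v] l \<Longrightarrow> u \<in> set l \<and> v \<in> set l"
  using subseq_set by fastforce

lemma comb:
  fixes Ra Rb :: "nat \<Rightarrow> nat \<Rightarrow> bool" and x t :: nat
  assumes xt: "x \<le> t" and ra: "\<And>u v. Ra u v \<Longrightarrow> t < u \<and> t < v"
    and rb: "\<And>u v. Rb u v \<Longrightarrow> x < u \<and> u \<le> t \<and> x < v \<and> v \<le> t"
    and A213: "\<And>p q r. Ra q p \<Longrightarrow> Ra p r \<Longrightarrow> p < q \<Longrightarrow> q < r \<Longrightarrow> False"
    and A231: "\<And>p q r. Ra q r \<Longrightarrow> Ra r p \<Longrightarrow> p < q \<Longrightarrow> q < r \<Longrightarrow> False"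
    and B213: "\<And>p q r. Rb q p \<Longrightarrow> Rb p r \<Longrightarrow> p < q \<Longrightarrow> q < r \<Longrightarrow> False"
    and B231: "\<And>p q r. Rb q r \<Longrightarrow> Rb r p \<Longrightarrow> p < q \<Longrightarrow> q < r \<Longrightarrow> False"
    and AD: "\<And>p q r s. Ra p q \<Longrightarrow> p < q \<Longrightarrow> Rb r s \<Longrightarrow> s < r \<Longrightarrow> False"
  defines "P \<equiv> \<lambda>u v. Ra u v \<or> Rb u v \<or> (t < u \<and> (v = x \<or> (x < v \<and> v \<le> t))) \<or> (u = x \<and> x < v \<and> v \<le> t)"
  shows "\<not> (P q p \<and> P p r \<and> p < q \<and> q < r)"
    and "\<not> (P a b \<and> P b c \<and> P c d \<and> a < d \<and> d < b \<and> b < c)"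
    and "\<not> (P b c \<and> P c d \<and> P d a \<and> a < d \<and> d < b \<and> b < c)"
    and "\<not> (P c d \<and> P d a \<and> P a b \<and> a < d \<and> d < b \<and> b < c)"
    and "\<not> (P d a \<and> P a b \<and> P b c \<and> a < d \<and> d < b \<and> b < c)"
proof -
  show "\<not> (P q p \<and> P p r \<and> p < q \<and> q < r)"
    unfolding P_def using xt ra[of q p] ra[of p r] rb[of q p] rb[of p r]
    by (auto; metis A213 B213 A231 B231 AD)
  show "\<not> (P a b \<and> P b c \<and> P c d \<and> a < d \<and> d < b \<and> b < c)"
    unfolding P_def using xt ra[of a b] ra[of b c] ra[of c d] rb[of a b] rb[of b c] rb[of c d]
    by (auto; metis A213 B213 A231 B231 AD)
  show "\<not> (P b c \<and> P c d \<and> P d a \<and> a < d \<and> d < b \<and> b < c)"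
    unfolding P_def using xt ra[of b c] ra[of c d] ra[of d a] rb[of b c] rb[of c d] rb[of d a]
    by (auto; metis A213 B213 A231 B231 AD)
  show "\<not> (P c d \<and> P d a \<and> P a b \<and> a < d \<and> d < b \<and> b < c)"
    unfolding P_def using xt ra[of c d] ra[of d a] ra[of a b] rb[of c d] rb[of d a] rb[of a b]
    by (auto; metis A213 B213 A231 B231 AD)
  show "\<not> (P d a \<and> P a b \<and> P b c \<and> a < d \<and> d < b \<and> b < c)"
    unfolding P_def using xt ra[of d a] ra[of a b] ra[of b c] rb[of d a] rb[of a b] rb[of b c]
    by (auto; metis A213 B213 A231 B231 AD)
qed

lemma pat213I: "a < b \<Longrightarrow> b < c \<Longrightarrow> subseq [b,a,c] s \<Longrightarrow> pat213 s"
  unfolding pat213_def by (rule exI[of _ a], rule exI[of _ b], rule exI[of _ c]) simp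
lemma pat231I: "a < b \<Longrightarrow> b < c \<Longrightarrow> subseq [b,c,a] s \<Longrightarrow> pat231 s"
  unfolding pat231_def by (rule exI[of _ a], rule exI[of _ b], rule exI[of _ c]) simp
lemma pat4I: "a < d \<Longrightarrow> d < b \<Longrightarrow> b < c \<Longrightarrow>
  subseq [a,b,c,d] s \<or> subseq [b,c,d,a] s \<or> subseq [c,d,a,b] s \<or> subseq [d,a,b,c] s \<Longrightarrow> pat4 s"
  unfolding pat4_def by (rule exI[of _ a], rule exI[of _ b], rule exI[of _ c], rule exI[of _ d]) simp
lemma ascI: "u < v \<Longrightarrow> subseq [u,v] s \<Longrightarrow> asc s"
  unfolding asc_def by (rule exI[of _ u], rule exI[of _ v]) simp
lemma descI: "v < u \<Longrightarrow> subseq [u,v] s \<Longrightarrow> desc s"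
  unfolding desc_def by (rule exI[of _ u], rule exI[of _ v]) simp

lemma good_if:
  assumes d: "distinct (a @ x # b)" and xt: "x \<le> t"
    and H1: "\<forall>u\<in>set a. t < u" and H2: "\<forall>v\<in>set b. x < v \<and> v \<le> t"
    and Wa: "Wp a" and Wb: "Wp b" and ad: "\<not> asc a \<or> \<not> desc b"
  shows "Good (a @ x # b)"
proof -
  have da: "distinct a" and db: "distinct b" using d by auto
  define Ra where "Ra = (\<lambda>u v. subseq [u,v] a)"
  define Rb where "Rb = (\<lambda>u v. subseq [u,v] b)"
  define P where "P \<equiv> \<lambda>u v. Ra u v \<or> Rb u v \<or> (t < u \<and> (v = x \<or> (x < v \<and> v \<le> t))) \<or> (u = x \<and> x < v \<and> v \<le> t)"
  have ra: "t < u \<and> t < v" if "Ra u v" for u v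
    using that pair_set[of u v a] H1 unfolding Ra_def by simp
  have rb: "x < u \<and> u \<le> t \<and> x < v \<and> v \<le> t" if "Rb u v" for u v
    using that pair_set[of u v b] H2 unfolding Rb_def by simp
  have A213: "False" if "Ra q p" "Ra p r" "p < q" "q < r" for p q r
  proof -
    have "subseq [q,p,r] a" using that sub3[OF da, of q p r] unfolding Ra_def by simp
    then have "pat213 a" using that(3,4) by (rule_tac pat213I)
    then show False using Wa unfolding Wp_def by simp
  qed
  have A231: "False" if "Ra q r" "Ra r p" "p < q" "q < r" for p q r
  proof -
    have "subseq [q,r,p] a" using that sub3[OF da, of q r p] unfolding Ra_def by simp
    then have "pat231 a" using that(3,4) by (rule_tac pat231I)
    then show False using Wa unfolding Wp_def by simp
  qed
  have B213: "False" if "Rb q p" "Rb p r" "p < q" "q < r" for p q r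
  proof -
    have "subseq [q,p,r] b" using that sub3[OF db, of q p r] unfolding Rb_def by simp
    then have "pat213 b" using that(3,4) by (rule_tac pat213I)
    then show False using Wb unfolding Wp_def by simp
  qed
  have B231: "False" if "Rb q r" "Rb r p" "p < q" "q < r" for p q r
  proof -
    have "subseq [q,r,p] b" using that sub3[OF db, of q r p] unfolding Rb_def by simp
    then have "pat231 b" using that(3,4) by (rule_tac pat231I)
    then show False using Wb unfolding Wp_def by simp
  qed
  have AD: "False" if "Ra p q" "p < q" "Rb r s" "s < r" for p q r s
  proof -
    have "asc a" using that(2,1) unfolding Ra_def by (rule ascI)
    moreover have "desc b" using that(4,3) unfolding Rb_def by (rule descI)
    ultimately show False using ad by simp
  qed
  note C = comb[where x=x and t=t and Ra=Ra and Rb=Rb, OF xt ra rb A213 A231 B213 B231 AD]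
  have PP: "P u v" if "subseq [u,v] (a @ x # b)" for u v
    using that unfolding pair_split P_def Ra_def Rb_def using H1 H2 by auto
  have n213: "\<not> pat213 (a @ x # b)"
  proof
    assume "pat213 (a @ x # b)"
    then obtain p q r where o: "p < q" "q < r" "subseq [q,p,r] (a @ x # b)"
      unfolding pat213_def by blast
    then have "P q p" "P p r" using sub3[OF d, of q p r] PP by simp_all
    then show False using C(1)[where q=q and p=p and r=r] o(1,2) by (simp add: P_def)
  qed
  have n4: "\<not> pat4 (a @ x # b)"
  proof
    assume "pat4 (a @ x # b)"
    then obtain p q r s where o: "p < s" "s < q" "q < r" and
      h: "subseq [p,q,r,s] (a @ x # b) \<or> subseq [q,r,s,p] (a @ x # b) \<or> subseq [r,s,p,q] (a @ x # b) \<or> subseq [s,p,q,r] (a @ x # b)"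
      unfolding pat4_def by blast
    from h show False
    proof (elim disjE)
      assume "subseq [p,q,r,s] (a @ x # b)"
      then have "P p q" "P q r" "P r s" using sub4[OF d] PP by simp_all
      then show False using C(2)[where a=p and b=q and c=r and d=s] o by (simp add: P_def)
    next
      assume "subseq [q,r,s,p] (a @ x # b)"
      then have "P q r" "P r s" "P s p" using sub4[OF d] PP by simp_all
      then show False using C(3)[where b=q and c=r and d=s and a=p] o by (simp add: P_def)
    next
      assume "subseq [r,s,p,q] (a @ x # b)"
      then have "P r s" "P s p" "P p q" using sub4[OF d] PP by simp_all
      then show False using C(4)[where c=r and d=s and a=p and b=q] o by (simp add: P_def)
    next
      assume "subseq [s,p,q,r] (a @ x # b)"
      then have "P s p" "P p q" "P q r" using sub4[OF d] PP by simp_all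
      then show False using C(5)[where d=s and a=p and b=q and c=r] o by (simp add: P_def)
    qed
  qed
  show ?thesis unfolding Good_def using n213 n4 by simp
qed

lemma sub_prefix: "subseq l a \<Longrightarrow> subseq l (a @ b)"
  by (rule list_emb_prefix)
lemma sub_suffix: "subseq l b \<Longrightarrow> subseq l (a @ b)"
  by (rule list_emb_append2)

lemma good_dec:
  assumes d: "distinct (a @ x # b)" and xa: "\<forall>u\<in>set a. x < u" and xb: "\<forall>v\<in>set b. x < v"
    and G: "Good (a @ x # b)"
  shows "\<forall>u\<in>set a. \<forall>v\<in>set b. v < u" and "Wp a" and "Wp b" and "\<not> asc a \<or> \<not> desc b"
proof -
  have n213: "\<not> pat213 (a @ x # b)" and n4: "\<not> pat4 (a @ x # b)" using G unfolding Good_def by simp_all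
  show H3: "\<forall>u\<in>set a. \<forall>v\<in>set b. v < u"
  proof (intro ballI)
    fix u v assume u: "u \<in> set a" and v: "v \<in> set b"
    have "u \<noteq> v" using d u v by auto
    show "v < u"
    proof (rule ccontr)
      assume "\<not> v < u"
      then have "u < v" using \<open>u \<noteq> v\<close> by simp
      have "subseq [u,x] (a @ x # b)" "subseq [x,v] (a @ x # b)"
        unfolding pair_split using u v by simp_all
      then have "subseq [u,x,v] (a @ x # b)" using sub3[OF d] by simp
      then have "pat213 (a @ x # b)" using xa u \<open>u < v\<close> by (rule_tac pat213I) simp_all
      then show False using n213 by simp
    qed
  qed
  show "Wp a" unfolding Wp_def
  proof
    show "\<not> pat213 a"
    proof
      assume "pat213 a"
      then obtain p q r where o: "p < q" "q < r" "subseq [q,p,r] a" unfolding pat213_def by blast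
      have "subseq [q,p,r] (a @ x # b)" using o(3) by (rule sub_prefix)
      then have "pat213 (a @ x # b)" by (rule pat213I[OF o(1,2)])
      then show False using n213 by simp
    qed
    show "\<not> pat231 a"
    proof
      assume "pat231 a"
      then obtain p q r where o: "p < q" "q < r" "subseq [q,r,p] a" unfolding pat231_def by blast
      have "subseq ([q,r,p] @ [x]) (a @ [x])" using o(3) by (rule list_emb_append_mono) simp
      then have "subseq [q,r,p,x] (a @ [x] @ b)" using sub_prefix[of _ "a @ [x]" b] by simp
      moreover have "x < p" using o(3) xa subseq_set by fastforce
      ultimately have "pat4 (a @ x # b)" using o(1,2) by (rule_tac pat4I[of x p q r]) simp_all
      then show False using n4 by simp
    qed
  qed
  show "Wp b" unfolding Wp_def
  proof
    show "\<not> pat213 b"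
    proof
      assume "pat213 b"
      then obtain p q r where o: "p < q" "q < r" "subseq [q,p,r] b" unfolding pat213_def by blast
      have "subseq [q,p,r] ((a @ [x]) @ b)" using o(3) by (rule sub_suffix)
      then have "pat213 (a @ x # b)" using pat213I[OF o(1,2)] by simp
      then show False using n213 by simp
    qed
    show "\<not> pat231 b"
    proof
      assume "pat231 b"
      then obtain p q r where o: "p < q" "q < r" "subseq [q,r,p] b" unfolding pat231_def by blast
      have "subseq [x,q,r,p] (x # b)" using o(3) by simp
      then have "subseq [x,q,r,p] (a @ x # b)" by (rule sub_suffix)
      moreover have "x < p" using o(3) xb subseq_set by fastforce
      ultimately have "pat4 (a @ x # b)" using o(1,2) by (rule_tac pat4I[of x p q r]) simp_all
      then show False using n4 by simp
    qed
  qed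
  show "\<not> asc a \<or> \<not> desc b"
  proof (rule ccontr)
    assume "\<not> (\<not> asc a \<or> \<not> desc b)"
    then obtain u v w z where o: "u < v" "subseq [u,v] a" "z < w" "subseq [w,z] b"
      unfolding asc_def desc_def by blast
    have "subseq [w,z] (x # b)" using o(4) by (rule list_emb_Cons)
    then have "subseq ([u,v] @ [w,z]) (a @ (x # b))" using o(2) by (rule_tac list_emb_append_mono)
    then have s: "subseq [u,v,w,z] (a @ x # b)" by simp
    have "u \<in> set a" "w \<in> set b" using pair_set[OF o(2)] pair_set[OF o(4)] by simp_all
    then have "w < u" using H3 by simp
    then have "pat4 (a @ x # b)" using o(1,3) s by (rule_tac pat4I[of z w u v]) simp_all
    then show False using n4 by simp
  qed
qed

lemma two_order: "y \<in> set s \<Longrightarrow> z \<in> set s \<Longrightarrow> y \<noteq> z \<Longrightarrow> subseq [y,z] s \<or> subseq [z,y] s"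
proof (induction s)
  case Nil then show ?case by simp
next
  case (Cons w s)
  show ?case
  proof (cases "y = w")
    case True
    then have "z \<in> set s" using Cons by auto
    then have "subseq [z] s" by (simp add: subseq_singleton_left)
    then have "subseq [y,z] (w # s)" using True by simp
    then show ?thesis by (rule disjI1)
  next
    case False
    show ?thesis
    proof (cases "z = w")
      case True
      then have "y \<in> set s" using Cons False by auto
      then have "subseq [y] s" by (simp add: subseq_singleton_left)
      then have "subseq [z,y] (w # s)" using True by simp
      then show ?thesis by (rule disjI2)
    next
      case False2: False
      then have "y \<in> set s" "z \<in> set s" using Cons False by auto
      then have "subseq [y,z] s \<or> subseq [z,y] s" using Cons by simp
      then show ?thesis
      proof
        assume "subseq [y,z] s" then have "subseq [y,z] (w#s)" by (rule list_emb_Cons)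
        then show ?thesis by (rule disjI1)
      next
        assume "subseq [z,y] s" then have "subseq [z,y] (w#s)" by (rule list_emb_Cons)
        then show ?thesis by (rule disjI2)
      qed
    qed
  qed
qed

lemma Wp_tail: "Wp (x # s) \<Longrightarrow> Wp s"
proof -
  assume h: "Wp (x # s)"
  have "\<not> pat213 s"
  proof
    assume "pat213 s"
    then obtain a b c where o: "a < b" "b < c" "subseq [b,a,c] s" unfolding pat213_def by blast
    have "subseq [b,a,c] (x # s)" using o(3) by (rule list_emb_Cons)
    then have "pat213 (x # s)" by (rule pat213I[OF o(1,2)])
    then show False using h unfolding Wp_def by simp
  qed
  moreover have "\<not> pat231 s"
  proof
    assume "pat231 s"
    then obtain a b c where o: "a < b" "b < c" "subseq [b,c,a] s" unfolding pat231_def by blast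
    have "subseq [b,c,a] (x # s)" using o(3) by (rule list_emb_Cons)
    then have "pat231 (x # s)" by (rule pat231I[OF o(1,2)])
    then show False using h unfolding Wp_def by simp
  qed
  ultimately show ?thesis unfolding Wp_def by simp
qed

lemma Wp_head: 
  assumes "Wp (x # s)" "x \<notin> set s"
  shows "(\<forall>y\<in>set s. x < y) \<or> (\<forall>y\<in>set s. y < x)"
proof (rule ccontr)
  assume "\<not> ?thesis"
  then obtain y z where yz: "y \<in> set s" "z \<in> set s" "\<not> x < y" "\<not> z < x" by blast
  then have "y < x" "x < z" using assms(2) by (metis linorder_neqE_nat)+
  then have "y \<noteq> z" by simp
  then have "subseq [y,z] s \<or> subseq [z,y] s" using two_order[OF yz(1,2)] by simp
  then show False
  proof
    assume "subseq [y,z] s"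
    then have "subseq [x,y,z] (x # s)" by simp
    then have "pat213 (x # s)" by (rule pat213I[OF \<open>y < x\<close> \<open>x < z\<close>])
    then show False using assms(1) unfolding Wp_def by simp
  next
    assume "subseq [z,y] s"
    then have "subseq [x,z,y] (x # s)" by simp
    then have "pat231 (x # s)" by (rule pat231I[OF \<open>y < x\<close> \<open>x < z\<close>])
    then show False using assms(1) unfolding Wp_def by simp
  qed
qed

lemma subseq_Cons_cases: "subseq (y # ys) (x # s) \<Longrightarrow> (y = x \<and> subseq ys s) \<or> subseq (y # ys) s"
  by (simp split: if_splits)

lemma Wp_cons_min:
  assumes "Wp s" "\<forall>y\<in>set s. x < y"
  shows "Wp (x # s)"
proof -
  have "\<not> pat213 (x # s)"
  proof
    assume "pat213 (x # s)"
    then obtain a b c where o: "a < b" "b < c" "subseq [b,a,c] (x # s)" unfolding pat213_def by blast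
    from subseq_Cons_cases[OF o(3)] show False
    proof
      assume h: "b = x \<and> subseq [a,c] s"
      then have "a \<in> set s" "c \<in> set s" using pair_set[of a c s] by simp_all
      then show False using assms(2) h o(1) by force
    next
      assume "subseq [b,a,c] s"
      then have "pat213 s" by (rule pat213I[OF o(1,2)])
      then show False using assms(1) unfolding Wp_def by simp
    qed
  qed
  moreover have "\<not> pat231 (x # s)"
  proof
    assume "pat231 (x # s)"
    then obtain a b c where o: "a < b" "b < c" "subseq [b,c,a] (x # s)" unfolding pat231_def by blast
    from subseq_Cons_cases[OF o(3)] show False
    proof
      assume h: "b = x \<and> subseq [c,a] s"
      then have "a \<in> set s" "c \<in> set s" using pair_set[of c a s] by simp_all
      then show False using assms(2) h o(1) by force
    next
      assume "subseq [b,c,a] s"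
      then have "pat231 s" by (rule pat231I[OF o(1,2)])
      then show False using assms(1) unfolding Wp_def by simp
    qed
  qed
  ultimately show ?thesis unfolding Wp_def by simp
qed

lemma Wp_cons_max:
  assumes "Wp s" "\<forall>y\<in>set s. y < x"
  shows "Wp (x # s)"
proof -
  have "\<not> pat213 (x # s)"
  proof
    assume "pat213 (x # s)"
    then obtain a b c where o: "a < b" "b < c" "subseq [b,a,c] (x # s)" unfolding pat213_def by blast
    from subseq_Cons_cases[OF o(3)] show False
    proof
      assume h: "b = x \<and> subseq [a,c] s"
      then have "a \<in> set s" "c \<in> set s" using pair_set[of a c s] by simp_all
      then show False using assms(2) h o(2) by force
    next
      assume "subseq [b,a,c] s"
      then have "pat213 s" by (rule pat213I[OF o(1,2)])
      then show False using assms(1) unfolding Wp_def by simp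
    qed
  qed
  moreover have "\<not> pat231 (x # s)"
  proof
    assume "pat231 (x # s)"
    then obtain a b c where o: "a < b" "b < c" "subseq [b,c,a] (x # s)" unfolding pat231_def by blast
    from subseq_Cons_cases[OF o(3)] show False
    proof
      assume h: "b = x \<and> subseq [c,a] s"
      then have "a \<in> set s" "c \<in> set s" using pair_set[of c a s] by simp_all
      then show False using assms(2) h o(2) by force
    next
      assume "subseq [b,c,a] s"
      then have "pat231 s" by (rule pat231I[OF o(1,2)])
      then show False using assms(1) unfolding Wp_def by simp
    qed
  qed
  ultimately show ?thesis unfolding Wp_def by simp
qed

definition Wset :: "nat \<Rightarrow> nat \<Rightarrow> nat list set" where
  "Wset lo hi = {s. distinct s \<and> set s = {lo..<hi} \<and> Wp s}"

lemma Wp_Nil: "Wp []"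
  unfolding Wp_def pat213_def pat231_def by simp

lemma Wset_empty: "hi \<le> lo \<Longrightarrow> Wset lo hi = {[]}"
  unfolding Wset_def using Wp_Nil by auto

lemma Wset_rec:
  assumes "lo < hi"
  shows "Wset lo hi = (\<lambda>s. lo # s) ` Wset (Suc lo) hi \<union> (\<lambda>s. (hi - 1) # s) ` Wset lo (hi - 1)"
proof
  show "Wset lo hi \<subseteq> (\<lambda>s. lo # s) ` Wset (Suc lo) hi \<union> (\<lambda>s. (hi - 1) # s) ` Wset lo (hi - 1)"
  proof
    fix s assume "s \<in> Wset lo hi"
    then have d: "distinct s" and st: "set s = {lo..<hi}" and w: "Wp s" unfolding Wset_def by auto
    then obtain y t where s: "s = y # t" using assms by (cases s) auto
    have yn: "y \<notin> set t" using d s by simp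
    have wt: "Wp t" using w s Wp_tail by simp
    have sy: "set t = {lo..<hi} - {y}" using st s yn by auto
    have y: "lo \<le> y" "y < hi" using st s by auto
    from Wp_head[of y t] w s yn
    have "(\<forall>z\<in>set t. y < z) \<or> (\<forall>z\<in>set t. z < y)" by simp
    then show "s \<in> (\<lambda>s. lo # s) ` Wset (Suc lo) hi \<union> (\<lambda>s. (hi - 1) # s) ` Wset lo (hi - 1)"
    proof
      assume h: "\<forall>z\<in>set t. y < z"
      have "y = lo"
      proof (rule ccontr)
        assume "y \<noteq> lo"
        then have "lo \<in> set t" using sy assms by auto
        then have "y < lo" using h by simp
        then show False using y by simp
      qed
      have "{lo..<hi} - {lo} = {Suc lo..<hi}" by (rule set_eqI) auto
      then have "set t = {Suc lo..<hi}" using sy \<open>y = lo\<close> by simp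
      then have "t \<in> Wset (Suc lo) hi" unfolding Wset_def using d s wt by simp
      then have "s \<in> (\<lambda>s. lo # s) ` Wset (Suc lo) hi" using s \<open>y = lo\<close> by simp
      then show ?thesis by (rule UnI1)
    next
      assume h: "\<forall>z\<in>set t. z < y"
      have "y = hi - 1"
      proof (rule ccontr)
        assume "y \<noteq> hi - 1"
        then have "hi - 1 \<in> set t" using sy assms y by auto
        then have "hi - 1 < y" using h by simp
        then show False using y by simp
      qed
      have "{lo..<hi} - {hi - 1} = {lo..<hi - 1}" using assms by (intro set_eqI) auto
      then have "set t = {lo..<hi - 1}" using sy \<open>y = hi - 1\<close> by simp
      then have "t \<in> Wset lo (hi - 1)" unfolding Wset_def using d s wt by simp
      then have "s \<in> (\<lambda>s. (hi - 1) # s) ` Wset lo (hi - 1)" using s \<open>y = hi - 1\<close> by simp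
      then show ?thesis by (rule UnI2)
    qed
  qed
next
  show "(\<lambda>s. lo # s) ` Wset (Suc lo) hi \<union> (\<lambda>s. (hi - 1) # s) ` Wset lo (hi - 1) \<subseteq> Wset lo hi"
  proof
    fix s assume "s \<in> (\<lambda>s. lo # s) ` Wset (Suc lo) hi \<union> (\<lambda>s. (hi - 1) # s) ` Wset lo (hi - 1)"
    then show "s \<in> Wset lo hi"
    proof
      assume "s \<in> (\<lambda>s. lo # s) ` Wset (Suc lo) hi"
      then obtain t where s: "s = lo # t" and t: "distinct t" "set t = {Suc lo..<hi}" "Wp t"
        unfolding Wset_def by auto
      have "Wp (lo # t)" using Wp_cons_min[OF t(3)] t(2) by auto
      then show ?thesis unfolding Wset_def using s t assms by auto
    next
      assume "s \<in> (\<lambda>s. (hi - 1) # s) ` Wset lo (hi - 1)"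
      then obtain t where s: "s = (hi - 1) # t" and t: "distinct t" "set t = {lo..<hi - 1}" "Wp t"
        unfolding Wset_def by auto
      have "Wp ((hi - 1) # t)" using Wp_cons_max[OF t(3)] t(2) by auto
      moreover have "set s = {lo..<hi}" using s t(2) assms by auto
      ultimately show ?thesis unfolding Wset_def using s t assms by auto
    qed
  qed
qed

definition cW :: "nat \<Rightarrow> nat" where "cW j = (if j = 0 then 1 else 2 ^ (j - 1))"

lemma Wset_card: "finite (Wset lo hi) \<and> card (Wset lo hi) = cW (hi - lo)"
proof (induction "hi - lo" arbitrary: lo hi)
  case 0
  then show ?case using Wset_empty[of hi lo] by (simp add: cW_def)
next
  case (Suc j)
  then have lh: "lo < hi" by simp
  show ?case
  proof (cases j)
    case 0
    then have "hi = Suc lo" using Suc(2) by simp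
    then have "Wset lo hi = {[lo]}" using Wset_rec[OF lh] Wset_empty[of hi "Suc lo"] Wset_empty[of lo lo] by auto
    then show ?thesis using \<open>hi = Suc lo\<close> by (simp add: cW_def)
  next
    case (Suc j')
    have jj: "j = hi - Suc lo" "j = hi - 1 - lo" using Suc.hyps(2) by simp_all
    have IH1: "finite (Wset (Suc lo) hi) \<and> card (Wset (Suc lo) hi) = cW j" using Suc.hyps(1)[of hi "Suc lo"] jj by simp
    have IH2: "finite (Wset lo (hi - 1)) \<and> card (Wset lo (hi - 1)) = cW j" using Suc.hyps(1)[of "hi - 1" lo] jj by simp
    have ne: "lo \<noteq> hi - 1" using Suc.hyps(2) Suc by simp
    have disj: "(\<lambda>s. lo # s) ` Wset (Suc lo) hi \<inter> (\<lambda>s. (hi - 1) # s) ` Wset lo (hi - 1) = {}"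
      using ne by auto
    have c1: "card ((\<lambda>s. lo # s) ` Wset (Suc lo) hi) = cW j"
      using IH1 by (simp add: card_image)
    have c2: "card ((\<lambda>s. (hi - 1) # s) ` Wset lo (hi - 1)) = cW j"
      using IH2 by (simp add: card_image)
    have "card (Wset lo hi) = cW j + cW j"
      unfolding Wset_rec[OF lh] using card_Un_disjoint[OF _ _ disj] IH1 IH2 c1 c2 by simp
    moreover have "cW (hi - lo) = cW j + cW j"
    proof -
      have e1: "hi - lo = Suc (Suc j')" using jj(1) Suc lh by simp
      show ?thesis unfolding e1 using Suc by (simp add: cW_def)
    qed
    moreover have "finite (Wset lo hi)" unfolding Wset_rec[OF lh] using IH1 IH2 by simp
    ultimately show ?thesis by simp
  qed
qed

lemma sorted_wrt_pair: "sorted_wrt R l \<Longrightarrow> subseq [u,v] l \<Longrightarrow> R u v"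
proof -
  assume s: "sorted_wrt R l" and h: "subseq [u,v] l"
  from list_emb_ConsD[OF h] obtain us w vs where l: "l = us @ w # vs" "u = w" "subseq [v] vs" by blast
  then have "v \<in> set vs" by (simp add: subseq_singleton_left)
  then show "R u v" using s l by (simp add: sorted_wrt_append)
qed

lemma noasc_sorted: "distinct l \<Longrightarrow> \<not> asc l \<Longrightarrow> sorted_wrt (\<lambda>a b. b < a) l"
proof (induction l)
  case Nil then show ?case by simp
next
  case (Cons x t)
  have "\<not> asc t"
  proof
    assume "asc t"
    then obtain u v where o: "u < v" "subseq [u,v] t" unfolding asc_def by blast
    have "subseq [u,v] (x # t)" using o(2) by (rule list_emb_Cons)
    then have "asc (x # t)" by (rule ascI[OF o(1)])
    then show False using Cons.prems by simp
  qed
  then have st: "sorted_wrt (\<lambda>a b. b < a) t" using Cons by simp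
  have "y < x" if y: "y \<in> set t" for y
  proof -
    have "x \<noteq> y" using Cons.prems(1) y by auto
    moreover have "\<not> x < y"
    proof
      assume "x < y"
      have "subseq [y] t" using y by (simp add: subseq_singleton_left)
      then have "subseq [x,y] (x # t)" by simp
      then have "asc (x # t)" by (rule ascI[OF \<open>x < y\<close>])
      then show False using Cons.prems by simp
    qed
    ultimately show "y < x" by simp
  qed
  then show ?case using st by simp
qed

lemma nodesc_sorted: "distinct l \<Longrightarrow> \<not> desc l \<Longrightarrow> sorted_wrt (<) l"
proof (induction l)
  case Nil then show ?case by simp
next
  case (Cons x t)
  have "\<not> desc t"
  proof
    assume "desc t"
    then obtain u v where o: "v < u" "subseq [u,v] t" unfolding desc_def by blast
    have "subseq [u,v] (x # t)" using o(2) by (rule list_emb_Cons)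
    then have "desc (x # t)" by (rule descI[OF o(1)])
    then show False using Cons.prems by simp
  qed
  then have st: "sorted_wrt (<) t" using Cons by simp
  have "x < y" if y: "y \<in> set t" for y
  proof -
    have "x \<noteq> y" using Cons.prems(1) y by auto
    moreover have "\<not> y < x"
    proof
      assume "y < x"
      have "subseq [y] t" using y by (simp add: subseq_singleton_left)
      then have "subseq [x,y] (x # t)" by simp
      then have "desc (x # t)" by (rule descI[OF \<open>y < x\<close>])
      then show False using Cons.prems by simp
    qed
    ultimately show "x < y" by simp
  qed
  then show ?case using st by simp
qed

lemma inc_props: "Wp [lo..<hi] \<and> \<not> desc [lo..<hi]"
proof -
  have s: "sorted_wrt (<) [lo..<hi]" by simp
  have "\<not> pat213 [lo..<hi]"
  proof
    assume "pat213 [lo..<hi]"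
    then obtain a b c where o: "a < b" "b < c" "subseq [b,a,c] [lo..<hi]" unfolding pat213_def by blast
    then have "b < a" using sub2_of3[OF o(3)] sorted_wrt_pair[OF s] by blast
    then show False using o by simp
  qed
  moreover have "\<not> pat231 [lo..<hi]"
  proof
    assume "pat231 [lo..<hi]"
    then obtain a b c where o: "a < b" "b < c" "subseq [b,c,a] [lo..<hi]" unfolding pat231_def by blast
    then have "c < a" using sub2_of3[OF o(3)] sorted_wrt_pair[OF s] by blast
    then show False using o by simp
  qed
  moreover have "\<not> desc [lo..<hi]"
  proof
    assume "desc [lo..<hi]"
    then obtain u v where o: "v < u" "subseq [u,v] [lo..<hi]" unfolding desc_def by blast
    then have "u < v" using sorted_wrt_pair[OF s] by blast
    then show False using o by simp
  qed
  ultimately show ?thesis unfolding Wp_def by simp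
qed

lemma dec_props: "Wp (rev [lo..<hi]) \<and> \<not> asc (rev [lo..<hi])"
proof -
  have s: "sorted_wrt (\<lambda>a b. b < a) (rev [lo..<hi])" by (simp add: sorted_wrt_rev)
  have "\<not> pat213 (rev [lo..<hi])"
  proof
    assume "pat213 (rev [lo..<hi])"
    then obtain a b c where o: "a < b" "b < c" "subseq [b,a,c] (rev [lo..<hi])" unfolding pat213_def by blast
    then have "c < a" using sub2_of3[OF o(3)] sorted_wrt_pair[OF s] by blast
    then show False using o by simp
  qed
  moreover have "\<not> pat231 (rev [lo..<hi])"
  proof
    assume "pat231 (rev [lo..<hi])"
    then obtain a b c where o: "a < b" "b < c" "subseq [b,c,a] (rev [lo..<hi])" unfolding pat231_def by blast
    then have "c < b" using sub2_of3[OF o(3)] sorted_wrt_pair[OF s] by blast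
    then show False using o by simp
  qed
  moreover have "\<not> asc (rev [lo..<hi])"
  proof
    assume "asc (rev [lo..<hi])"
    then obtain u v where o: "u < v" "subseq [u,v] (rev [lo..<hi])" unfolding asc_def by blast
    then have "v < u" using sorted_wrt_pair[OF s] by blast
    then show False using o by simp
  qed
  ultimately show ?thesis unfolding Wp_def by simp
qed

lemma inc_in: "[lo..<hi] \<in> Wset lo hi"
  unfolding Wset_def using inc_props by simp
lemma dec_in: "rev [lo..<hi] \<in> Wset lo hi"
  unfolding Wset_def using dec_props by simp

lemma noasc_iff: "s \<in> Wset lo hi \<Longrightarrow> \<not> asc s \<longleftrightarrow> s = rev [lo..<hi]"
proof
  assume s: "s \<in> Wset lo hi" and n: "\<not> asc s"
  then have d: "distinct s" and st: "set s = {lo..<hi}" unfolding Wset_def by auto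
  have "sorted_wrt (\<lambda>a b. b < a) s" using noasc_sorted[OF d n] .
  then have "sorted_wrt (<) (rev s)" by (simp add: sorted_wrt_rev)
  then have "sorted (rev s)" "distinct (rev s)" by (simp_all add: strict_sorted_iff)
  then have "rev s = [lo..<hi]" using st by (intro sorted_distinct_set_unique) simp_all
  then show "s = rev [lo..<hi]" by (metis rev_rev_ident)
next
  assume "s = rev [lo..<hi]" then show "\<not> asc s" using dec_props by simp
qed

lemma nodesc_iff: "s \<in> Wset lo hi \<Longrightarrow> \<not> desc s \<longleftrightarrow> s = [lo..<hi]"
proof
  assume s: "s \<in> Wset lo hi" and n: "\<not> desc s"
  then have d: "distinct s" and st: "set s = {lo..<hi}" unfolding Wset_def by auto
  have "sorted_wrt (<) s" using nodesc_sorted[OF d n] .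
  then have "sorted s" by (simp add: strict_sorted_iff)
  then show "s = [lo..<hi]" using st d by (intro sorted_distinct_set_unique) simp_all
next
  assume "s = [lo..<hi]" then show "\<not> desc s" using inc_props by simp
qed

declare upt_Suc[simp del]

definition GS :: "nat \<Rightarrow> nat list set" where
  "GS m = {s. distinct s \<and> set s = {1..<Suc m} \<and> Good s}"
definition TT :: "nat \<Rightarrow> nat \<Rightarrow> (nat list \<times> nat list) set" where
  "TT m k = ({rev [k+2..<m+1]} \<times> Wset 2 (k+2)) \<union> (Wset (k+2) (m+1) \<times> {[2..<k+2]})"

lemma TT_char: "(a,b) \<in> TT m k \<longleftrightarrow> a \<in> Wset (k+2) (m+1) \<and> b \<in> Wset 2 (k+2) \<and> (\<not> asc a \<or> \<not> desc b)"
proof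
  assume "(a,b) \<in> TT m k"
  then show "a \<in> Wset (k+2) (m+1) \<and> b \<in> Wset 2 (k+2) \<and> (\<not> asc a \<or> \<not> desc b)"
    unfolding TT_def using dec_in[of "k+2" "m+1"] inc_in[of 2 "k+2"] dec_props[of "k+2" "m+1"] inc_props[of 2 "k+2"] by blast
next
  assume h: "a \<in> Wset (k+2) (m+1) \<and> b \<in> Wset 2 (k+2) \<and> (\<not> asc a \<or> \<not> desc b)"
  then have "a = rev [k+2..<m+1] \<or> b = [2..<k+2]" using noasc_iff nodesc_iff by blast
  then show "(a,b) \<in> TT m k" unfolding TT_def using h by blast
qed

lemma TT_finite: "finite (TT m k)"
  unfolding TT_def using Wset_card by simp

lemma TT_card: "card (TT m k) + 1 = cW k + cW (m + 1 - (k + 2))"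
proof -
  let ?A = "{rev [k+2..<m+1]} \<times> Wset 2 (k+2)" and ?B = "Wset (k+2) (m+1) \<times> {[2..<k+2]}"
  have fA: "finite ?A" and fB: "finite ?B" using Wset_card by simp_all
  have "?A \<inter> ?B = {(rev [k+2..<m+1], [2..<k+2])}" using dec_in inc_in by auto
  then have "card (?A \<inter> ?B) = 1" by simp
  moreover have "card ?A = cW k" using Wset_card[of 2 "k+2"] by (simp add: card_cartesian_product)
  moreover have "card ?B = cW (m + 1 - (k + 2))" using Wset_card[of "k+2" "m+1"] by (simp add: card_cartesian_product)
  ultimately show ?thesis using card_Un_Int[OF fA fB] unfolding TT_def by simp
qed

lemma Wset_set: "s \<in> Wset lo hi \<Longrightarrow> distinct s \<and> set s = {lo..<hi} \<and> Wp s"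
  unfolding Wset_def by simp

lemma GS_sup: "k < m \<Longrightarrow> p \<in> TT m k \<Longrightarrow> (case p of (a,b) \<Rightarrow> a @ 1 # b) \<in> GS m"
proof -
  assume km: "k < m" and p: "p \<in> TT m k"
  obtain a b where ab: "p = (a,b)" by (cases p)
  then have h: "a \<in> Wset (k+2) (m+1)" "b \<in> Wset 2 (k+2)" "\<not> asc a \<or> \<not> desc b" using p TT_char by auto
  have a: "distinct a" "set a = {k+2..<m+1}" "Wp a" using Wset_set[OF h(1)] by auto
  have b: "distinct b" "set b = {2..<k+2}" "Wp b" using Wset_set[OF h(2)] by auto
  have d: "distinct (a @ 1 # b)" using a b by auto
  have st: "set (a @ 1 # b) = {1..<Suc m}" using a b km by auto
  have "Good (a @ 1 # b)"
    by (rule good_if[OF d, of "k+1"]) (use a b h(3) in auto)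
  then show ?thesis using ab d st unfolding GS_def by simp
qed

lemma interval_lemma:
  assumes "distinct b" "\<forall>v\<in>set b. 2 \<le> v" and "\<And>z. b \<noteq> [] \<Longrightarrow> 2 \<le> z \<Longrightarrow> z \<le> Max (set b) \<Longrightarrow> z \<in> set b"
  shows "set b = {2..<length b + 2}"
proof (cases "b = []")
  case True then show ?thesis by simp
next
  case False
  let ?M = "Max (set b)"
  have "set b = {2..?M}"
  proof
    show "set b \<subseteq> {2..?M}" using assms(2) by auto
    show "{2..?M} \<subseteq> set b" using assms(3) False by auto
  qed
  have c: "card {2..?M} = ?M + 1 - 2" by simp
  have "card (set b) = ?M + 1 - 2" using arg_cong[of _ _ card, OF \<open>set b = {2..?M}\<close>] c by (rule trans)
  then have "card (set b) = ?M - 1" by simp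
  then have "length b = ?M - 1" using assms(1) distinct_card by metis
  moreover have "2 \<le> ?M"
  proof -
    obtain y where y: "y \<in> set b" using False by (cases b) auto
    then have "y \<le> ?M" by simp
    moreover have "2 \<le> y" using y assms(2) by simp
    ultimately show ?thesis by simp
  qed
  ultimately have "?M = length b + 1" by simp
  then show ?thesis using \<open>set b = {2..?M}\<close> by auto
qed

lemma GS_sub: "1 \<le> m \<Longrightarrow> s \<in> GS m \<Longrightarrow> \<exists>k<m. \<exists>p\<in>TT m k. s = (case p of (a,b) \<Rightarrow> a @ 1 # b)"
proof -
  assume m1: "1 \<le> m" and "s \<in> GS m"
  then have d: "distinct s" and st: "set s = {1..<Suc m}" and G: "Good s" unfolding GS_def by auto
  have "1 \<in> set s" using st m1 by simp
  then obtain a b where s: "s = a @ 1 # b" by (meson split_list)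
  have dab: "distinct (a @ 1 # b)" using d s by simp
  have xa: "\<forall>u\<in>set a. 1 < u"
  proof
    fix u assume u: "u \<in> set a"
    then have "u \<in> set s" using s by simp
    then have "1 \<le> u" using st by simp
    moreover have "u \<noteq> 1" using dab u by auto
    ultimately show "1 < u" by simp
  qed
  have xb: "\<forall>v\<in>set b. 1 < v"
  proof
    fix u assume u: "u \<in> set b"
    then have "u \<in> set s" using s by simp
    then have "1 \<le> u" using st by simp
    moreover have "u \<noteq> 1" using dab u by auto
    ultimately show "1 < u" by simp
  qed
  note gd = good_dec[OF dab xa xb G[unfolded s]]
  let ?k = "length b"
  have lens: "length a + 1 + ?k = m" using st d s distinct_card by (metis card_atLeastLessThan diff_Suc_1 length_append length_Cons add.commute add_Suc_right plus_1_eq_Suc)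
  have sb: "set b = {2..<?k + 2}"
  proof (rule interval_lemma)
    show "distinct b" using dab by simp
    show "\<forall>v\<in>set b. 2 \<le> v" using xb by auto
    fix z assume bne: "b \<noteq> []" and z: "2 \<le> z" "z \<le> Max (set b)"
    then have Mb: "Max (set b) \<in> set b" by simp
    have "Max (set b) \<in> set s" using Mb s by simp
    then have "Max (set b) < Suc m" using st by simp
    then have "z \<in> set s" using st z by simp
    then have "z \<in> set a \<or> z = 1 \<or> z \<in> set b" using s by auto
    moreover have "z \<notin> set a"
    proof
      assume "z \<in> set a"
      then have "Max (set b) < z" using gd(1) Mb by simp
      then show False using z by simp
    qed
    ultimately show "z \<in> set b" using z by simp
  qed
  have sa: "set a = {?k+2..<m+1}"
  proof -
    have "set a = set s - {1} - set b" using dab s by auto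
    then show ?thesis using st sb lens by auto
  qed
  have "a \<in> Wset (?k+2) (m+1)" unfolding Wset_def using sa dab gd(2) by simp
  moreover have "b \<in> Wset 2 (?k+2)" unfolding Wset_def using sb dab gd(3) by simp
  ultimately have "(a,b) \<in> TT m ?k" using TT_char gd(4) by simp
  moreover have "?k < m" using lens by simp
  ultimately show ?thesis using s by force
qed

lemma sum_cW: "1 \<le> m \<Longrightarrow> (\<Sum>k<m. cW k) = 2 ^ (m - 1)"
proof (induction m)
  case 0 then show ?case by simp
next
  case (Suc m)
  show ?case
  proof (cases "m = 0")
    case True then show ?thesis by (simp add: cW_def)
  next
    case False
    then have "(\<Sum>k<m. cW k) = 2 ^ (m - 1)" using Suc by simp
    then have "(\<Sum>k<Suc m. cW k) = 2 ^ (m - 1) + 2 ^ (m - 1)" using False by (simp add: cW_def)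
    also have "\<dots> = 2 ^ m" using False by (cases m) simp_all
    finally show ?thesis by simp
  qed
qed

definition FF :: "nat list \<times> nat list \<Rightarrow> nat list" where "FF p = (case p of (a,b) \<Rightarrow> a @ 1 # b)"

lemma TT_sets: "(a,b) \<in> TT m k \<Longrightarrow> set a = {k+2..<m+1} \<and> set b = {2..<k+2}"
  using TT_char Wset_set by blast

lemma GS_eq: "1 \<le> m \<Longrightarrow> GS m = FF ` (\<Union>k\<in>{..<m}. TT m k)"
proof
  assume m: "1 \<le> m"
  show "GS m \<subseteq> FF ` (\<Union>k\<in>{..<m}. TT m k)"
  proof
    fix s assume "s \<in> GS m"
    then obtain k p where "k < m" "p \<in> TT m k" "s = (case p of (a,b) \<Rightarrow> a @ 1 # b)"
      using GS_sub[OF m] by blast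
    then show "s \<in> FF ` (\<Union>k\<in>{..<m}. TT m k)" unfolding FF_def by blast
  qed
  show "FF ` (\<Union>k\<in>{..<m}. TT m k) \<subseteq> GS m"
    unfolding FF_def using GS_sup by blast
qed

lemma FF_inj: "inj_on FF (\<Union>k\<in>{..<m}. TT m k)"
proof (rule inj_onI)
  fix p q assume p: "p \<in> (\<Union>k\<in>{..<m}. TT m k)" and q: "q \<in> (\<Union>k\<in>{..<m}. TT m k)" and e: "FF p = FF q"
  obtain a b where ab: "p = (a,b)" by (cases p)
  obtain a' b' where ab': "q = (a',b')" by (cases q)
  from p ab obtain k where "(a,b) \<in> TT m k" by blast
  then have n: "1 \<notin> set a" "1 \<notin> set b" using TT_sets by auto
  have "a @ 1 # b = a' @ 1 # b'" using e ab ab' unfolding FF_def by simp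
  then have "a = a' \<and> b = b'" using append_Cons_eq_iff[OF n] by blast
  then show "p = q" using ab ab' by simp
qed

lemma GS_card: "1 \<le> m \<Longrightarrow> int (card (GS m)) = 2 ^ m - int m"
proof -
  assume m: "1 \<le> m"
  have "card (GS m) = card (\<Union>k\<in>{..<m}. TT m k)"
    unfolding GS_eq[OF m] by (rule card_image[OF FF_inj])
  also have "\<dots> = (\<Sum>k<m. card (TT m k))"
  proof (rule card_UN_disjoint)
    show "finite {..<m}" by simp
    show "\<forall>i\<in>{..<m}. finite (TT m i)" using TT_finite by simp
    show "\<forall>i\<in>{..<m}. \<forall>j\<in>{..<m}. i \<noteq> j \<longrightarrow> TT m i \<inter> TT m j = {}"
    proof (intro ballI impI)
      fix i j :: nat assume "i \<noteq> j"
      show "TT m i \<inter> TT m j = {}"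
      proof (rule ccontr)
        assume "TT m i \<inter> TT m j \<noteq> {}"
        then obtain a b where "(a,b) \<in> TT m i" "(a,b) \<in> TT m j" by auto
        then have "{2..<i+2} = {2..<j+2}" using TT_sets by metis
        then have "card {2..<i+2} = card {2..<j+2}" by simp
        then show False using \<open>i \<noteq> j\<close> by simp
      qed
    qed
  qed
  finally have c: "card (GS m) = (\<Sum>k<m. card (TT m k))" .
  have "int (card (GS m)) = (\<Sum>k<m. int (card (TT m k)))" unfolding c by simp
  also have "\<dots> = (\<Sum>k<m. int (cW k) + int (cW (m - Suc k)) - 1)"
  proof (rule sum.cong)
    fix k assume "k \<in> {..<m}"
    have "card (TT m k) + 1 = cW k + cW (m + 1 - (k + 2))" by (rule TT_card)
    moreover have "m + 1 - (k + 2) = m - Suc k" by simp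
    ultimately show "int (card (TT m k)) = int (cW k) + int (cW (m - Suc k)) - 1" by simp
  qed simp
  also have "\<dots> = (\<Sum>k<m. int (cW k)) + (\<Sum>k<m. int (cW (m - Suc k))) - int m"
    by (simp add: sum.distrib sum_subtractf)
  also have "(\<Sum>k<m. int (cW (m - Suc k))) = (\<Sum>k<m. int (cW k))"
    by (rule sum.nat_diff_reindex)
  also have "(\<Sum>k<m. int (cW k)) = int (2 ^ (m - 1))"
    using sum_cW[OF m] by (metis of_nat_sum)
  finally show ?thesis using m by (cases m) simp_all
qed

theorem theorem2:
  fixes n :: nat
  assumes "n \<ge> 1"
  shows "int (card {p \<in> circ_perms n. circ_avoids p [1,3,4,2]}) = 2 ^ (n - 1) - (int n - 1)"
proof -
  let ?m = "n - 1"
  have key: "circ_avoids (s @ [n]) [1,3,4,2] \<longleftrightarrow> Good s" if "\<forall>y\<in>set s. y < n" for s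
    unfolding circ_avoids_def circ_iff pat4_snoc[OF that] Good_def by simp
  have eq: "{p \<in> circ_perms n. circ_avoids p [1,3,4,2]} = (\<lambda>s. s @ [n]) ` GS ?m"
  proof
    show "{p \<in> circ_perms n. circ_avoids p [1,3,4,2]} \<subseteq> (\<lambda>s. s @ [n]) ` GS ?m"
    proof
      fix p assume "p \<in> {p \<in> circ_perms n. circ_avoids p [1,3,4,2]}"
      then have sp: "set p = {1..n}" and dp: "distinct p" and lp: "last p = n" and av: "circ_avoids p [1,3,4,2]"
        unfolding circ_perms_def permutations_of_set_def by auto
      have "p \<noteq> []" using sp assms by auto
      then obtain s where pe: "p = s @ [n]" using lp by (metis append_butlast_last_id)
      have ds: "distinct (s @ [n])" using dp pe by simp
      then have "n \<notin> set s" by simp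
      have ss: "set s = {1..<Suc ?m}"
      proof -
        have "insert n (set s) = {1..n}" using sp pe by simp
        then have "set s = {1..n} - {n}" using \<open>n \<notin> set s\<close> by auto
        moreover have "{1..n} - {n} = {1..<Suc ?m}" using assms by (intro set_eqI) auto
        ultimately show ?thesis by simp
      qed
      have lt: "\<forall>y\<in>set s. y < n" using ss assms by auto
      have "Good s" using key[OF lt] av pe by simp
      then have "s \<in> GS ?m" unfolding GS_def using ds ss by simp
      then show "p \<in> (\<lambda>s. s @ [n]) ` GS ?m" using pe by simp
    qed
    show "(\<lambda>s. s @ [n]) ` GS ?m \<subseteq> {p \<in> circ_perms n. circ_avoids p [1,3,4,2]}"
    proof
      fix p assume "p \<in> (\<lambda>s. s @ [n]) ` GS ?m"
      then obtain s where p: "p = s @ [n]" and "s \<in> GS ?m" by blast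
      then have ds: "distinct s" and ss: "set s = {1..<Suc ?m}" and G: "Good s" unfolding GS_def by auto
      have lt: "\<forall>y\<in>set s. y < n" using ss assms by auto
      have "insert n {1..<Suc ?m} = {1..n}" using assms by (intro set_eqI) auto
      then have "set p = {1..n}" using p ss by simp
      moreover have "distinct p" using p ds lt by auto
      moreover have "last p = n" using p by simp
      moreover have "circ_avoids p [1,3,4,2]" using key[OF lt] G p by simp
      ultimately show "p \<in> {p \<in> circ_perms n. circ_avoids p [1,3,4,2]}"
        unfolding circ_perms_def permutations_of_set_def by simp
    qed
  qed
  have inj: "inj_on (\<lambda>s. s @ [n]) (GS ?m)" by (rule inj_onI) simp
  have "card {p \<in> circ_perms n. circ_avoids p [1,3,4,2]} = card (GS ?m)"
    unfolding eq by (rule card_image[OF inj])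
  moreover have "?m = 0 \<or> 1 \<le> ?m" by auto
  moreover have "GS 0 = {[]}"
  proof -
    have "Good []" unfolding Good_def pat213_def pat4_def by simp
    then show ?thesis unfolding GS_def by auto
  qed
  ultimately show ?thesis
  proof -
    assume c: "card {p \<in> circ_perms n. circ_avoids p [1,3,4,2]} = card (GS ?m)"
      and cs: "?m = 0 \<or> 1 \<le> ?m" and g0: "GS 0 = {[]}"
    have im: "int ?m = int n - 1" using assms by simp
    from cs show ?thesis
    proof
      assume "?m = 0"
      then show ?thesis using c g0 im by simp
    next
      assume "1 \<le> ?m"
      then show ?thesis using c GS_card[of ?m] im by simp
    qed
  qed
qed

end
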